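(* Let $R \subseteq T$ be commutative rings and let $I$ be an ideal of $R$ with $IT = I$ (so $I$ is also an ideal of $T$). Let $W$ be a multiplicatively closed subset of $T$, put $V = W \cap R$, and suppose $I \cap W \neq \emptyset$. Then the natural map $R_V \to T_W$ is an isomorphism. *)

theory Defs
  imports "HOL-Algebra.Algebra"
begin

definition mult_closed :: "('a, 'm) ring_scheme \<Rightarrow> 'a set \<Rightarrow> bool" where
  "mult_closed A S \<longleftrightarrow> S \<subseteq> carrier A \<and> \<one>\<^bsub>A\<^esub> \<in> S \<and>
     (\<forall>s\<in>S. \<forall>t\<in>S. s \<otimes>\<^bsub>A\<^esub> t \<in> S)"

definition loc_rel :: "('a, 'm) ring_scheme \<Rightarrow> 'a set \<Rightarrow> (('a * 'a) * ('a * 'a)) set" where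
  "loc_rel A S = {((a, s), (a', s')). a \<in> carrier A \<and> s \<in> S \<and> a' \<in> carrier A \<and> s' \<in> S \<and>
     (\<exists>u\<in>S. u \<otimes>\<^bsub>A\<^esub> ((a \<otimes>\<^bsub>A\<^esub> s') \<ominus>\<^bsub>A\<^esub> (a' \<otimes>\<^bsub>A\<^esub> s)) = \<zero>\<^bsub>A\<^esub>)}"

definition loc_class :: "('a, 'm) ring_scheme \<Rightarrow> 'a set \<Rightarrow> 'a \<Rightarrow> 'a \<Rightarrow> ('a * 'a) set" where
  "loc_class A S a s = loc_rel A S `` {(a, s)}"

definition loc_rep :: "('a * 'a) set \<Rightarrow> 'a * 'a" where
  "loc_rep P = (SOME p. p \<in> P)"

definition loc_mult :: "('a, 'm) ring_scheme \<Rightarrow> 'a set \<Rightarrow> ('a * 'a) set \<Rightarrow> ('a * 'a) set \<Rightarrow> ('a * 'a) set" where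
  "loc_mult A S P Q = loc_class A S (fst (loc_rep P) \<otimes>\<^bsub>A\<^esub> fst (loc_rep Q))
                                    (snd (loc_rep P) \<otimes>\<^bsub>A\<^esub> snd (loc_rep Q))"

definition loc_add :: "('a, 'm) ring_scheme \<Rightarrow> 'a set \<Rightarrow> ('a * 'a) set \<Rightarrow> ('a * 'a) set \<Rightarrow> ('a * 'a) set" where
  "loc_add A S P Q = loc_class A S
      ((fst (loc_rep P) \<otimes>\<^bsub>A\<^esub> snd (loc_rep Q)) \<oplus>\<^bsub>A\<^esub> (fst (loc_rep Q) \<otimes>\<^bsub>A\<^esub> snd (loc_rep P)))
      (snd (loc_rep P) \<otimes>\<^bsub>A\<^esub> snd (loc_rep Q))"

definition localization :: "('a, 'm) ring_scheme \<Rightarrow> 'a set \<Rightarrow> ('a * 'a) set ring" where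
  "localization A S =
     \<lparr> carrier = (Sigma (carrier A) (\<lambda>_. S)) // loc_rel A S,
       monoid.mult = loc_mult A S,
       one = loc_class A S \<one>\<^bsub>A\<^esub> \<one>\<^bsub>A\<^esub>,
       ring.zero = loc_class A S \<zero>\<^bsub>A\<^esub> \<one>\<^bsub>A\<^esub>,
       ring.add = loc_add A S \<rparr>"

text \<open>The natural map R_V \<rightarrow> T_W for R \<subseteq> T and V \<subseteq> W: the class of (r,v) is
  sent to the class of (r,v); on a class P this is the image of P under ~_W.\<close>
definition loc_nat_map :: "('a, 'm) ring_scheme \<Rightarrow> 'a set \<Rightarrow> ('a * 'a) set \<Rightarrow> ('a * 'a) set" where
  "loc_nat_map T W P = loc_rel T W `` P"

end

theory Submission
  imports Defs
begin

lemma (in cring) loc_rel_iff: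
  assumes "S \<subseteq> carrier R"
  shows "((a,s),(a',s')) \<in> loc_rel R S \<longleftrightarrow> a \<in> carrier R \<and> s \<in> S \<and> a' \<in> carrier R \<and> s' \<in> S
     \<and> (\<exists>u\<in>S. u \<otimes> a \<otimes> s' = u \<otimes> a' \<otimes> s)"
proof -
  have "u \<otimes> ((a \<otimes> s') \<ominus> (a' \<otimes> s)) = \<zero> \<longleftrightarrow> u \<otimes> a \<otimes> s' = u \<otimes> a' \<otimes> s"
    if "u \<in> carrier R" "a \<in> carrier R" "s \<in> carrier R" "a' \<in> carrier R" "s' \<in> carrier R" for u
  proof -
    have "u \<otimes> ((a \<otimes> s') \<ominus> (a' \<otimes> s)) = (u \<otimes> a \<otimes> s') \<ominus> (u \<otimes> a' \<otimes> s)"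
      using that by algebra
    thus ?thesis using that by simp
  qed
  thus ?thesis unfolding loc_rel_def using assms by blast
qed

lemma (in cring) loc_equiv:
  assumes "mult_closed R S"
  shows "equiv (Sigma (carrier R) (\<lambda>_. S)) (loc_rel R S)"
proof -
  have S: "S \<subseteq> carrier R" "\<one> \<in> S" "\<And>s t. s \<in> S \<Longrightarrow> t \<in> S \<Longrightarrow> s \<otimes> t \<in> S"
    using assms unfolding mult_closed_def by auto
  note iff = loc_rel_iff[OF S(1)]
  show ?thesis
  proof (rule equivI)
    show "loc_rel R S \<subseteq> Sigma (carrier R) (\<lambda>_. S) \<times> Sigma (carrier R) (\<lambda>_. S)"
      unfolding loc_rel_def by auto
    show "refl_on (Sigma (carrier R) (\<lambda>_. S)) (loc_rel R S)"
    proof (rule refl_onI)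
      fix x assume "x \<in> Sigma (carrier R) (\<lambda>_. S)"
      then obtain a s where "x = (a,s)" "a \<in> carrier R" "s \<in> S" by auto
      thus "(x,x) \<in> loc_rel R S" using iff S by auto
    qed
    show "sym (loc_rel R S)"
    proof (rule symI)
      fix x y assume "(x,y) \<in> loc_rel R S"
      moreover obtain a s a' s' where "x = (a,s)" "y = (a',s')" by (cases x, cases y) auto
      ultimately show "(y,x) \<in> loc_rel R S" using iff by metis
    qed
    show "trans (loc_rel R S)"
    proof (rule transI)
      fix x y z assume xy: "(x,y) \<in> loc_rel R S" and yz: "(y,z) \<in> loc_rel R S"
      obtain a s a' s' a'' s'' where e: "x = (a,s)" "y = (a',s')" "z = (a'',s'')"
        by (cases x, cases y, cases z) auto
      from xy yz obtain u v where c: "a \<in> carrier R" "s \<in> S" "a' \<in> carrier R" "s' \<in> S"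
        "a'' \<in> carrier R" "s'' \<in> S" "u \<in> S" "v \<in> S"
        and h1: "u \<otimes> a \<otimes> s' = u \<otimes> a' \<otimes> s" and h2: "v \<otimes> a' \<otimes> s'' = v \<otimes> a'' \<otimes> s'"
        unfolding e iff by blast
      have cc: "s \<in> carrier R" "s' \<in> carrier R" "s'' \<in> carrier R" "u \<in> carrier R" "v \<in> carrier R"
        using c S(1) by auto
      have "(u \<otimes> v \<otimes> s') \<otimes> a \<otimes> s'' = (v \<otimes> s'') \<otimes> (u \<otimes> a \<otimes> s')"
        using c cc by (simp add: m_ac)
      also have "\<dots> = (v \<otimes> s'') \<otimes> (u \<otimes> a' \<otimes> s)" by (simp add: h1)
      also have "\<dots> = (u \<otimes> s) \<otimes> (v \<otimes> a' \<otimes> s'')" using c cc by (simp add: m_ac)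
      also have "\<dots> = (u \<otimes> s) \<otimes> (v \<otimes> a'' \<otimes> s')" by (simp add: h2)
      also have "\<dots> = (u \<otimes> v \<otimes> s') \<otimes> a'' \<otimes> s" using c cc by (simp add: m_ac)
      finally have "(u \<otimes> v \<otimes> s') \<otimes> a \<otimes> s'' = (u \<otimes> v \<otimes> s') \<otimes> a'' \<otimes> s" .
      moreover have "u \<otimes> v \<otimes> s' \<in> S" using S c by auto
      ultimately show "(x,z) \<in> loc_rel R S" unfolding e iff using c by blast
    qed
  qed
qed

lemma (in cring) loc_compat:
  assumes "mult_closed R S"
    and r1: "((a,s),(a',s')) \<in> loc_rel R S" and r2: "((b,t),(b',t')) \<in> loc_rel R S"
  shows "((a \<otimes> b, s \<otimes> t),(a' \<otimes> b', s' \<otimes> t')) \<in> loc_rel R S"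
    and "(((a \<otimes> t) \<oplus> (b \<otimes> s), s \<otimes> t),((a' \<otimes> t') \<oplus> (b' \<otimes> s'), s' \<otimes> t')) \<in> loc_rel R S"
proof -
  have S: "S \<subseteq> carrier R" "\<one> \<in> S" "\<And>s t. s \<in> S \<Longrightarrow> t \<in> S \<Longrightarrow> s \<otimes> t \<in> S"
    using assms unfolding mult_closed_def by auto
  note iff = loc_rel_iff[OF S(1)]
  from r1 r2 obtain u v where c: "a \<in> carrier R" "s \<in> S" "a' \<in> carrier R" "s' \<in> S"
    "b \<in> carrier R" "t \<in> S" "b' \<in> carrier R" "t' \<in> S" "u \<in> S" "v \<in> S"
    and h1: "u \<otimes> a \<otimes> s' = u \<otimes> a' \<otimes> s" and h2: "v \<otimes> b \<otimes> t' = v \<otimes> b' \<otimes> t"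
    unfolding iff by blast
  have cc: "s \<in> carrier R" "s' \<in> carrier R" "t \<in> carrier R" "t' \<in> carrier R" "u \<in> carrier R" "v \<in> carrier R"
    using c S(1) by auto
  have uv: "u \<otimes> v \<in> S" using S c by auto
  have sc: "s \<otimes> t \<in> S" "s' \<otimes> t' \<in> S" using S c by auto
  have "(u \<otimes> v) \<otimes> (a \<otimes> b) \<otimes> (s' \<otimes> t') = (u \<otimes> a \<otimes> s') \<otimes> (v \<otimes> b \<otimes> t')"
    using c cc by (simp add: m_ac)
  also have "\<dots> = (u \<otimes> a' \<otimes> s) \<otimes> (v \<otimes> b' \<otimes> t)" by (simp add: h1 h2)
  also have "\<dots> = (u \<otimes> v) \<otimes> (a' \<otimes> b') \<otimes> (s \<otimes> t)" using c cc by (simp add: m_ac)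
  finally show "((a \<otimes> b, s \<otimes> t),(a' \<otimes> b', s' \<otimes> t')) \<in> loc_rel R S"
    unfolding iff using c sc uv by blast
  have "(u \<otimes> v) \<otimes> ((a \<otimes> t) \<oplus> (b \<otimes> s)) \<otimes> (s' \<otimes> t')
      = (v \<otimes> t \<otimes> t') \<otimes> (u \<otimes> a \<otimes> s') \<oplus> (u \<otimes> s \<otimes> s') \<otimes> (v \<otimes> b \<otimes> t')"
    using c cc by algebra
  also have "\<dots> = (v \<otimes> t \<otimes> t') \<otimes> (u \<otimes> a' \<otimes> s) \<oplus> (u \<otimes> s \<otimes> s') \<otimes> (v \<otimes> b' \<otimes> t)"
    by (simp add: h1 h2)
  also have "\<dots> = (u \<otimes> v) \<otimes> ((a' \<otimes> t') \<oplus> (b' \<otimes> s')) \<otimes> (s \<otimes> t)"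
    using c cc by algebra
  finally show "(((a \<otimes> t) \<oplus> (b \<otimes> s), s \<otimes> t),((a' \<otimes> t') \<oplus> (b' \<otimes> s'), s' \<otimes> t')) \<in> loc_rel R S"
    unfolding iff using c cc sc uv by blast
qed


lemma (in cring) loc_rep_rel:
  assumes "mult_closed R S" "a \<in> carrier R" "s \<in> S"
  shows "((a,s), loc_rep (loc_class R S a s)) \<in> loc_rel R S"
proof -
  have "(a,s) \<in> loc_class R S a s"
    unfolding loc_class_def using equiv_class_self[OF loc_equiv[OF assms(1)]] assms by auto
  hence "loc_rep (loc_class R S a s) \<in> loc_class R S a s"
    unfolding loc_rep_def by (rule someI)
  thus ?thesis unfolding loc_class_def by auto
qed

lemma (in cring) loc_mult_class:
  assumes "mult_closed R S" "a \<in> carrier R" "s \<in> S" "b \<in> carrier R" "t \<in> S"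
  shows "loc_mult R S (loc_class R S a s) (loc_class R S b t) = loc_class R S (a \<otimes> b) (s \<otimes> t)"
    and "loc_add R S (loc_class R S a s) (loc_class R S b t) = loc_class R S ((a \<otimes> t) \<oplus> (b \<otimes> s)) (s \<otimes> t)"
proof -
  obtain a' s' where p: "loc_rep (loc_class R S a s) = (a',s')" by (cases "loc_rep (loc_class R S a s)")
  obtain b' t' where q: "loc_rep (loc_class R S b t) = (b',t')" by (cases "loc_rep (loc_class R S b t)")
  have r1: "((a,s),(a',s')) \<in> loc_rel R S" using loc_rep_rel[OF assms(1-3)] p by simp
  have r2: "((b,t),(b',t')) \<in> loc_rel R S" using loc_rep_rel[OF assms(1,4,5)] q by simp
  note E = loc_equiv[OF assms(1)]
  show "loc_mult R S (loc_class R S a s) (loc_class R S b t) = loc_class R S (a \<otimes> b) (s \<otimes> t)"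
    unfolding loc_mult_def p q fst_conv snd_conv unfolding loc_class_def
    using equiv_class_eq[OF E loc_compat(1)[OF assms(1) r1 r2]] by simp
  show "loc_add R S (loc_class R S a s) (loc_class R S b t) = loc_class R S ((a \<otimes> t) \<oplus> (b \<otimes> s)) (s \<otimes> t)"
    unfolding loc_add_def p q fst_conv snd_conv unfolding loc_class_def
    using equiv_class_eq[OF E loc_compat(2)[OF assms(1) r1 r2]] by simp
qed

theorem lemma4p4:
  fixes T :: "'a ring" and R I W V :: "'a set"
  assumes "cring T"
    and "subring R T"
    and "ideal I (T\<lparr>carrier := R\<rparr>)"
    and "genideal T I = I"
    and "mult_closed T W"
    and "V = W \<inter> R"
    and "I \<inter> W \<noteq> {}"
  shows "loc_nat_map T W \<in> ring_iso (localization (T\<lparr>carrier := R\<rparr>) V) (localization T W)"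
proof -
  let ?R = "T\<lparr>carrier := R\<rparr>"
  interpret T: cring T by (rule assms(1))
  have RT: "R \<subseteq> carrier T" using assms(2) by (rule subringE(1))
  have cR: "cring ?R" using T.subcring_iff[OF RT] T.subcringI'[OF assms(2)] by simp
  interpret Rr: cring ?R by (rule cR)
  have IR: "I \<subseteq> R" using ideal.axioms(1)[OF assms(3)] additive_subgroup.a_subset by force
  have IT: "ideal I T" using T.genideal_ideal[of I] IR RT assms(4) by auto
  have W: "W \<subseteq> carrier T" "\<one>\<^bsub>T\<^esub> \<in> W" "\<And>s t. s \<in> W \<Longrightarrow> t \<in> W \<Longrightarrow> s \<otimes>\<^bsub>T\<^esub> t \<in> W"
    using assms(5) unfolding mult_closed_def by auto
  have oneR: "\<one>\<^bsub>T\<^esub> \<in> R" using assms(2) by (rule subringE(3))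
  have mcV: "mult_closed ?R V"
    unfolding mult_closed_def using W oneR assms(6) subringE(6)[OF assms(2)] by auto
  have VW: "V \<subseteq> W" "V \<subseteq> R" using assms(6) by auto
  obtain i where i: "i \<in> I" "i \<in> W" using assms(7) by auto
  have iR: "i \<in> R" "i \<in> carrier T" using i IR RT by auto
  note iffW = T.loc_rel_iff[OF W(1)]
  note iffV = Rr.loc_rel_iff[of V, simplified, OF VW(2)]
  note EW = T.loc_equiv[OF assms(5)]
  note EV = Rr.loc_equiv[OF mcV]
  have VtoW: "(x,y) \<in> loc_rel T W" if "(x,y) \<in> loc_rel ?R V" for x y
  proof -
    obtain a s b t where e: "x = (a,s)" "y = (b,t)" by (cases x, cases y) auto
    show ?thesis using that unfolding e iffV iffW using VW RT by blast
  qed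
  have F: "loc_nat_map T W (loc_class ?R V a s) = loc_class T W a s" if "a \<in> R" "s \<in> V" for a s
  proof
    show "loc_nat_map T W (loc_class ?R V a s) \<subseteq> loc_class T W a s"
    proof
      fix z assume "z \<in> loc_nat_map T W (loc_class ?R V a s)"
      then obtain p where p: "p \<in> loc_class ?R V a s" "(p,z) \<in> loc_rel T W"
        unfolding loc_nat_map_def by auto
      have "((a,s),p) \<in> loc_rel T W" using p(1) VtoW unfolding loc_class_def by auto
      hence "((a,s),z) \<in> loc_rel T W" using p(2) EW unfolding equiv_def by (meson transE)
      thus "z \<in> loc_class T W a s" unfolding loc_class_def by auto
    qed
    have "(a,s) \<in> loc_class ?R V a s"
      unfolding loc_class_def using equiv_class_self[OF EV] that by auto
    thus "loc_class T W a s \<subseteq> loc_nat_map T W (loc_class ?R V a s)"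
      unfolding loc_nat_map_def loc_class_def by auto
  qed
  have carrV: "carrier (localization ?R V) = (Sigma R (\<lambda>_. V)) // loc_rel ?R V"
    unfolding localization_def by simp
  have carrW: "carrier (localization T W) = (Sigma (carrier T) (\<lambda>_. W)) // loc_rel T W"
    unfolding localization_def by simp
  have classV: "P \<in> carrier (localization ?R V) \<longleftrightarrow> (\<exists>a s. a \<in> R \<and> s \<in> V \<and> P = loc_class ?R V a s)" for P
    unfolding carrV loc_class_def quotient_def by auto
  have classW: "P \<in> carrier (localization T W) \<longleftrightarrow> (\<exists>a s. a \<in> carrier T \<and> s \<in> W \<and> P = loc_class T W a s)" for P
    unfolding carrW loc_class_def quotient_def by auto
  have hom: "loc_nat_map T W \<in> ring_hom (localization ?R V) (localization T W)"
  proof (rule ring_hom_memI)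
    fix P assume "P \<in> carrier (localization ?R V)"
    then obtain a s where c: "a \<in> R" "s \<in> V" "P = loc_class ?R V a s" using classV by auto
    hence "loc_nat_map T W P = loc_class T W a s" using F by simp
    moreover have "a \<in> carrier T" "s \<in> W" using c RT VW by auto
    ultimately show "loc_nat_map T W P \<in> carrier (localization T W)" using classW by blast
  next
    fix P Q assume "P \<in> carrier (localization ?R V)" "Q \<in> carrier (localization ?R V)"
    then obtain a s b t where c: "a \<in> R" "s \<in> V" "P = loc_class ?R V a s"
      "b \<in> R" "t \<in> V" "Q = loc_class ?R V b t" using classV by metis
    have cT: "a \<in> carrier T" "s \<in> W" "b \<in> carrier T" "t \<in> W" using c RT VW by auto
    have m1: "a \<otimes>\<^bsub>T\<^esub> b \<in> R" "s \<otimes>\<^bsub>T\<^esub> t \<in> V"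
      using c mcV subringE(6)[OF assms(2)] unfolding mult_closed_def by auto
    have m2: "(a \<otimes>\<^bsub>T\<^esub> t) \<oplus>\<^bsub>T\<^esub> (b \<otimes>\<^bsub>T\<^esub> s) \<in> R"
      using c VW subringE(6)[OF assms(2)] subringE(7)[OF assms(2)] by (meson subsetD)
    show "loc_nat_map T W (P \<otimes>\<^bsub>localization ?R V\<^esub> Q) =
          loc_nat_map T W P \<otimes>\<^bsub>localization T W\<^esub> loc_nat_map T W Q"
      using Rr.loc_mult_class(1)[OF mcV, of a s b t] T.loc_mult_class(1)[OF assms(5) cT] c F m1
      unfolding localization_def by simp
    show "loc_nat_map T W (P \<oplus>\<^bsub>localization ?R V\<^esub> Q) =
          loc_nat_map T W P \<oplus>\<^bsub>localization T W\<^esub> loc_nat_map T W Q"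
      using Rr.loc_mult_class(2)[OF mcV, of a s b t] T.loc_mult_class(2)[OF assms(5) cT] c F m1 m2
      unfolding localization_def by simp
  next
    show "loc_nat_map T W \<one>\<^bsub>localization ?R V\<^esub> = \<one>\<^bsub>localization T W\<^esub>"
      using F[OF oneR] oneR W(2) assms(6) unfolding localization_def by simp
  qed
  have inj: "inj_on (loc_nat_map T W) (carrier (localization ?R V))"
  proof (rule inj_onI)
    fix P Q assume "P \<in> carrier (localization ?R V)" "Q \<in> carrier (localization ?R V)"
      and eq: "loc_nat_map T W P = loc_nat_map T W Q"
    then obtain a s b t where c: "a \<in> R" "s \<in> V" "P = loc_class ?R V a s"
      "b \<in> R" "t \<in> V" "Q = loc_class ?R V b t" using classV by metis
    have cT: "a \<in> carrier T" "s \<in> W" "b \<in> carrier T" "t \<in> W" using c RT VW by auto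
    have "loc_class T W a s = loc_class T W b t" using eq F c by simp
    hence "((a,s),(b,t)) \<in> loc_rel T W"
      unfolding loc_class_def by (rule eq_equiv_class[OF _ EW]) (use cT in auto)
    then obtain u where u: "u \<in> W" "u \<otimes>\<^bsub>T\<^esub> a \<otimes>\<^bsub>T\<^esub> t = u \<otimes>\<^bsub>T\<^esub> b \<otimes>\<^bsub>T\<^esub> s"
      unfolding iffW by blast
    have uT: "u \<in> carrier T" "s \<in> carrier T" "t \<in> carrier T" using u W cT by auto
    have uiV: "u \<otimes>\<^bsub>T\<^esub> i \<in> V"
      using W(3)[OF u(1) i(2)] ideal.I_l_closed[OF IT i(1) uT(1)] IR assms(6) by auto
    have "(u \<otimes>\<^bsub>T\<^esub> i) \<otimes>\<^bsub>T\<^esub> a \<otimes>\<^bsub>T\<^esub> t = i \<otimes>\<^bsub>T\<^esub> (u \<otimes>\<^bsub>T\<^esub> a \<otimes>\<^bsub>T\<^esub> t)"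
      using uT cT iR by (simp add: T.m_ac)
    also have "\<dots> = i \<otimes>\<^bsub>T\<^esub> (u \<otimes>\<^bsub>T\<^esub> b \<otimes>\<^bsub>T\<^esub> s)" using u by simp
    also have "\<dots> = (u \<otimes>\<^bsub>T\<^esub> i) \<otimes>\<^bsub>T\<^esub> b \<otimes>\<^bsub>T\<^esub> s"
      using uT cT iR by (simp add: T.m_ac)
    finally have "((a,s),(b,t)) \<in> loc_rel ?R V" unfolding iffV using c uiV by blast
    thus "P = Q" using c equiv_class_eq[OF EV] unfolding loc_class_def by simp
  qed
  have surj: "loc_nat_map T W ` carrier (localization ?R V) = carrier (localization T W)"
  proof
    show "loc_nat_map T W ` carrier (localization ?R V) \<subseteq> carrier (localization T W)"
      using hom unfolding ring_hom_def by auto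
    show "carrier (localization T W) \<subseteq> loc_nat_map T W ` carrier (localization ?R V)"
    proof
      fix P assume "P \<in> carrier (localization T W)"
      then obtain a s where c: "a \<in> carrier T" "s \<in> W" "P = loc_class T W a s" using classW by auto
      have sT: "s \<in> carrier T" using c W by auto
      have ai: "a \<otimes>\<^bsub>T\<^esub> i \<in> R" using ideal.I_l_closed[OF IT i(1) c(1)] IR by auto
      have si: "s \<otimes>\<^bsub>T\<^esub> i \<in> V"
        using ideal.I_l_closed[OF IT i(1) sT] IR W(3)[OF c(2) i(2)] assms(6) by auto
      have "\<one>\<^bsub>T\<^esub> \<otimes>\<^bsub>T\<^esub> (a \<otimes>\<^bsub>T\<^esub> i) \<otimes>\<^bsub>T\<^esub> s = \<one>\<^bsub>T\<^esub> \<otimes>\<^bsub>T\<^esub> a \<otimes>\<^bsub>T\<^esub> (s \<otimes>\<^bsub>T\<^esub> i)"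
        using c sT iR by (simp add: T.m_ac)
      hence "((a \<otimes>\<^bsub>T\<^esub> i, s \<otimes>\<^bsub>T\<^esub> i),(a,s)) \<in> loc_rel T W"
        unfolding iffW using ai si RT VW c W(2) by blast
      hence "loc_class T W (a \<otimes>\<^bsub>T\<^esub> i) (s \<otimes>\<^bsub>T\<^esub> i) = P"
        using c equiv_class_eq[OF EW] unfolding loc_class_def by simp
      hence "P = loc_nat_map T W (loc_class ?R V (a \<otimes>\<^bsub>T\<^esub> i) (s \<otimes>\<^bsub>T\<^esub> i))" using F ai si by simp
      moreover have "loc_class ?R V (a \<otimes>\<^bsub>T\<^esub> i) (s \<otimes>\<^bsub>T\<^esub> i) \<in> carrier (localization ?R V)"
        using classV ai si by blast
      ultimately show "P \<in> loc_nat_map T W ` carrier (localization ?R V)" by blast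
    qed
  qed
  show ?thesis unfolding ring_iso_def bij_betw_def using hom inj surj by blast
qed

end
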